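(* If $X$ is a metric space with weak hyperbolic property C, then $X$ has straight finite decomposition complexity (i.e. the metric family $\{X\}$ has sFDC).
   Context: For $R>0$, a family $\mathcal U$ of nonempty subsets of a metric space is $R$-disjoint if $d(A,B)>R$ for all distinct $A,B\in\mathcal U$, where $d(A,B)=\inf\{d(a,b):a\in A,b\in B\}$. $B_r(x)$ denotes the open ball of radius $r$ about $x$. A subset $U\subset X$ is $(N,R)$-large scale doubling if for every $x\in X$ and every $r\ge R$, $B_{2r}(x)\cap U$ can be covered by $N$ balls of radius $r$ with centers in $X$. A family $\mathcal U$ of subsets of $X$ is weakly uniformly large scale doubling if there is $(N,R)$ such that each $U\in\mathcal U$ is $(N,R)$-large scale doubling. $X$ has weak hyperbolic property C if for every sequence $R_0,R_1,\dots$ of positive reals there exist $n\ge0$ and $R_i$-disjoint families $\mathcal U_i$ ($i=0,\dots,n$) such that $\bigcup_{i=0}^n\mathcal U_i$ is a weakly uniformly large scale doubling cover of $X$. A metric family is a collection of metric spaces (subsets carry the restricted metric); it is uniformly bounded if the supremum of diameters of its members is finite. For metric families $\mathcal X,\mathcal Y$ and $R>0$, $\mathcal X\xrightarrow{R}\mathcal Y$ means every $X\in\mathcal X$ satisfies $X=\bigcup(\mathcal U_1\cup\mathcal U_2)$ for some $R$-disjoint families $\mathcal U_1,\mathcal U_2$ with $\mathcal U_1\cup\mathcal U_2\subset\mathcal Y$. A metric family $\mathcal X$ has sFDC if for every sequence $R_0\le R_1\le\cdots$ of positive reals there exist $n\in\mathbb N$ and metric families $\mathcal U_0,\dots,\mathcal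 U_n$ with $\mathcal U_n$ uniformly bounded and $\mathcal X\xrightarrow{R_0}\mathcal U_0\xrightarrow{R_1}\cdots\xrightarrow{R_n}\mathcal U_n$. *)

theory Defs
  imports "HOL-Analysis.Analysis"
begin

text \<open>A metric space is modelled as a subset X of a type of class metric_space,
  with the restricted metric; metric families of subspaces of X are sets of subsets.\<close>

definition R_disjoint :: "real \<Rightarrow> 'a::metric_space set set \<Rightarrow> bool" where
  "R_disjoint R \<U> \<longleftrightarrow> (\<forall>A\<in>\<U>. A \<noteq> {}) \<and>
     (\<forall>A\<in>\<U>. \<forall>B\<in>\<U>. A \<noteq> B \<longrightarrow> setdist A B > R)"

definition ls_doubling :: "'a::metric_space set \<Rightarrow> nat \<Rightarrow> real \<Rightarrow> 'a set \<Rightarrow> bool" where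
  "ls_doubling X N R U \<longleftrightarrow> (\<forall>x\<in>X. \<forall>r\<ge>R.
     \<exists>C. C \<subseteq> X \<and> finite C \<and> card C \<le> N \<and>
       ball x (2*r) \<inter> X \<inter> U \<subseteq> (\<Union>c\<in>C. ball c r))"

definition weakly_uniformly_ls_doubling :: "'a::metric_space set \<Rightarrow> 'a set set \<Rightarrow> bool" where
  "weakly_uniformly_ls_doubling X \<U> \<longleftrightarrow> (\<exists>N R. R > 0 \<and> (\<forall>U\<in>\<U>. ls_doubling X N R U))"

definition weak_hyperbolic_C :: "'a::metric_space set \<Rightarrow> bool" where
  "weak_hyperbolic_C X \<longleftrightarrow> (\<forall>Rs::nat \<Rightarrow> real. (\<forall>i. Rs i > 0) \<longrightarrow>
     (\<exists>n::nat. \<exists>\<U>::nat \<Rightarrow> 'a set set.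
        (\<forall>i\<le>n. R_disjoint (Rs i) (\<U> i)) \<and>
        (\<forall>i\<le>n. \<forall>U\<in>\<U> i. U \<subseteq> X) \<and>
        \<Union>(\<Union>i\<le>n. \<U> i) = X \<and>
        weakly_uniformly_ls_doubling X (\<Union>i\<le>n. \<U> i)))"

definition uniformly_bounded :: "'a::metric_space set set \<Rightarrow> bool" where
  "uniformly_bounded \<U> \<longleftrightarrow> (\<exists>D. \<forall>U\<in>\<U>. \<forall>a\<in>U. \<forall>b\<in>U. dist a b \<le> D)"

definition decomposes :: "real \<Rightarrow> 'a::metric_space set set \<Rightarrow> 'a set set \<Rightarrow> bool" where
  "decomposes R \<X> \<Y> \<longleftrightarrow> (\<forall>X\<in>\<X>. \<exists>\<U>1 \<U>2.
      R_disjoint R \<U>1 \<and> R_disjoint R \<U>2 \<and> \<U>1 \<union> \<U>2 \<subseteq> \<Y> \<and> X = \<Union>(\<U>1 \<union> \<U>2))"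

definition sFDC :: "'a::metric_space set set \<Rightarrow> bool" where
  "sFDC \<X> \<longleftrightarrow> (\<forall>Rs::nat \<Rightarrow> real. (\<forall>i. Rs i > 0) \<longrightarrow> mono Rs \<longrightarrow>
     (\<exists>n::nat. \<exists>\<U>::nat \<Rightarrow> 'a set set.
        uniformly_bounded (\<U> n) \<and> decomposes (Rs 0) \<X> (\<U> 0) \<and>
        (\<forall>i<n. decomposes (Rs (Suc i)) (\<U> i) (\<U> (Suc i)))))"

end

theory Submission
  imports Defs
begin

lemma lsD:
  assumes "ls_doubling X N R U" "x \<in> X" "R \<le> r"
  shows "\<exists>C. C \<subseteq> X \<and> finite C \<and> card C \<le> N \<and>
       ball x (2*r) \<inter> X \<inter> U \<subseteq> (\<Union>c\<in>C. ball c r)"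
  using assms unfolding ls_doubling_def by blast

lemma ls_iter:
  assumes ls: "ls_doubling X N R U" and R: "R > 0"
  shows "\<And>x r. x \<in> X \<Longrightarrow> R \<le> r \<Longrightarrow> \<exists>C. C \<subseteq> X \<and> finite C \<and> card C \<le> N^k \<and>
           ball x (2^k*r) \<inter> X \<inter> U \<subseteq> (\<Union>c\<in>C. ball c r)"
proof (induction k)
  case 0
  then show ?case by (intro exI[of _ "{x}"]) auto
next
  case (Suc k)
  have one: "(1::real) \<le> 2^k" by simp
  have "1 * r \<le> 2^k * r" by (rule mult_right_mono[OF one]) (use Suc.prems R in linarith)
  then have "R \<le> 2^k * r" using Suc.prems by linarith
  then obtain C1 where C1: "C1 \<subseteq> X" "finite C1" "card C1 \<le> N"
     "ball x (2*(2^k*r)) \<inter> X \<inter> U \<subseteq> (\<Union>c\<in>C1. ball c (2^k*r))"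
    using lsD[OF ls Suc.prems(1) \<open>R \<le> 2^k * r\<close>] by blast
  have "\<forall>c\<in>C1. \<exists>C. C \<subseteq> X \<and> finite C \<and> card C \<le> N^k \<and>
           ball c (2^k*r) \<inter> X \<inter> U \<subseteq> (\<Union>c\<in>C. ball c r)"
  proof
    fix c assume "c \<in> C1"
    then have "c \<in> X" using C1(1) by blast
    then show "\<exists>C. C \<subseteq> X \<and> finite C \<and> card C \<le> N^k \<and>
           ball c (2^k*r) \<inter> X \<inter> U \<subseteq> (\<Union>c\<in>C. ball c r)"
      by (rule Suc.IH) (rule Suc.prems(2))
  qed
  then obtain F where F0: "\<forall>c\<in>C1. F c \<subseteq> X \<and> finite (F c) \<and> card (F c) \<le> N^k \<and>
           ball c (2^k*r) \<inter> X \<inter> U \<subseteq> (\<Union>c\<in>F c. ball c r)"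
    by (rule bchoice[THEN exE]) blast
  have F: "\<And>c. c \<in> C1 \<Longrightarrow> F c \<subseteq> X \<and> finite (F c) \<and> card (F c) \<le> N^k \<and>
           ball c (2^k*r) \<inter> X \<inter> U \<subseteq> (\<Union>c\<in>F c. ball c r)" using F0 by blast
  show ?case
  proof (intro exI[of _ "\<Union>c\<in>C1. F c"] conjI)
    show "(\<Union>c\<in>C1. F c) \<subseteq> X" using F by blast
    show "finite (\<Union>c\<in>C1. F c)" using F C1 by (simp add: finite_UN)
    have "card (\<Union>c\<in>C1. F c) \<le> (\<Sum>c\<in>C1. card (F c))" by (rule card_UN_le[OF C1(2)])
    also have "\<dots> \<le> card C1 * N^k" using sum_bounded_above[of C1 "\<lambda>c. card (F c)" "N^k"] F by simp
    also have "\<dots> \<le> N * N^k" using C1(3) by simp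
    finally show "card (\<Union>c\<in>C1. F c) \<le> N^Suc k" by simp
    show "ball x (2 ^ Suc k * r) \<inter> X \<inter> U \<subseteq> (\<Union>c\<in>(\<Union>c\<in>C1. F c). ball c r)"
    proof
      fix y assume y: "y \<in> ball x (2 ^ Suc k * r) \<inter> X \<inter> U"
      then have "y \<in> ball x (2*(2^k*r)) \<inter> X \<inter> U" by (simp add: mult.assoc)
      then obtain c where c: "c \<in> C1" "y \<in> ball c (2^k*r)" using C1(4) by blast
      then obtain d where "d \<in> F c" "y \<in> ball d r" using F[OF c(1)] y by blast
      then show "y \<in> (\<Union>c\<in>(\<Union>c\<in>C1. F c). ball c r)" using c by blast
    qed
  qed
qed

lemma sep_count:
  assumes ls: "ls_doubling X N R U" and R: "R > 0" and S: "2*R \<le> S"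
    and u: "u \<in> X" and UX: "U \<subseteq> X"
    and P: "P \<subseteq> U" "P \<subseteq> ball u (4*S)"
    and sep: "\<And>p q. p \<in> P \<Longrightarrow> q \<in> P \<Longrightarrow> p \<noteq> q \<Longrightarrow> S \<le> dist p q"
  shows "finite P \<and> card P \<le> N^3"
proof -
  obtain C where C: "C \<subseteq> X" "finite C" "card C \<le> N^3"
    "ball u (2^3*(S/2)) \<inter> X \<inter> U \<subseteq> (\<Union>c\<in>C. ball c (S/2))"
    using ls_iter[OF ls R u, of "S/2" 3] S by auto
  have PC: "\<exists>c\<in>C. p \<in> ball c (S/2)" if "p \<in> P" for p
  proof -
    have "p \<in> ball u (2^3*(S/2)) \<inter> X \<inter> U" using that P UX by auto
    then show ?thesis using C(4) by blast
  qed
  define g where "g p = (SOME c. c \<in> C \<and> p \<in> ball c (S/2))" for p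
  have g: "g p \<in> C \<and> p \<in> ball (g p) (S/2)" if "p \<in> P" for p
    unfolding g_def using someI_ex[OF PC[OF that, unfolded Bex_def]] .
  have inj: "inj_on g P"
  proof (rule inj_onI)
    fix p q assume pq: "p \<in> P" "q \<in> P" "g p = g q"
    show "p = q"
    proof (rule ccontr)
      assume "p \<noteq> q"
      then have "S \<le> dist p q" using sep pq by auto
      moreover have "dist p q < S"
      proof -
        have "dist (g p) p < S/2" "dist (g p) q < S/2" using g[OF pq(1)] g[OF pq(2)] pq(3) by auto
        moreover have "dist p q \<le> dist (g p) p + dist (g p) q" by (rule dist_triangle3)
        ultimately show ?thesis by linarith
      qed
      ultimately show False by simp
    qed
  qed
  have sub: "g ` P \<subseteq> C" using g by blast
  then have "finite (g ` P)" using C(2) finite_subset by blast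
  then have "finite P" using inj finite_imageD by blast
  moreover have "card P \<le> card C" using card_inj_on_le[OF inj sub C(2)] .
  ultimately show ?thesis using C(3) by simp
qed


definition goodcol :: "'a::metric_space set \<Rightarrow> nat \<Rightarrow> real \<Rightarrow> real \<Rightarrow> ('a \<times> nat) set \<Rightarrow> bool" where
  "goodcol U K S D G \<longleftrightarrow> G \<subseteq> U \<times> {..<K} \<and>
     (\<forall>p i q j. (p,i) \<in> G \<longrightarrow> (q,j) \<in> G \<longrightarrow> p \<noteq> q \<longrightarrow> S \<le> dist p q) \<and>
     (\<forall>p i q. (p,i) \<in> G \<longrightarrow> (q,i) \<in> G \<longrightarrow> p \<noteq> q \<longrightarrow> D < dist p q) \<and>
     (\<forall>p i j. (p,i) \<in> G \<longrightarrow> (p,j) \<in> G \<longrightarrow> i = j)"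

lemma goodcolD:
  assumes "goodcol U K S D G"
  shows "G \<subseteq> U \<times> {..<K}"
    and "\<And>p i q j. (p,i) \<in> G \<Longrightarrow> (q,j) \<in> G \<Longrightarrow> p \<noteq> q \<Longrightarrow> S \<le> dist p q"
    and "\<And>p i q. (p,i) \<in> G \<Longrightarrow> (q,i) \<in> G \<Longrightarrow> p \<noteq> q \<Longrightarrow> D < dist p q"
    and "\<And>p i j. (p,i) \<in> G \<Longrightarrow> (p,j) \<in> G \<Longrightarrow> i = j"
  using assms unfolding goodcol_def by auto

lemma colour_exists:
  assumes ls: "ls_doubling X N R U" and R: "R > 0" and S: "2*R \<le> S" and D: "D < 4*S"
    and UX: "U \<subseteq> X" and K: "N^3 < K"
  shows "\<exists>G. goodcol U K S D G \<and> (\<forall>u\<in>U. \<exists>q i. (q,i) \<in> G \<and> dist u q < S)"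
proof -
  let ?A = "{G. goodcol U K S D G}"
  have "\<exists>M\<in>?A. \<forall>G\<in>?A. M \<subseteq> G \<longrightarrow> G = M"
  proof (rule subset_Zorn')
    fix C assume ch: "subset.chain ?A C"
    then have CA: "C \<subseteq> ?A" and cmp: "\<And>G1 G2. G1 \<in> C \<Longrightarrow> G2 \<in> C \<Longrightarrow> G1 \<subseteq> G2 \<or> G2 \<subseteq> G1"
      unfolding subset_chain_def by auto
    have two: "\<exists>G\<in>C. x \<in> G \<and> y \<in> G" if xy: "x \<in> \<Union>C" "y \<in> \<Union>C" for x y
    proof -
      obtain G1 G2 where "G1 \<in> C" "G2 \<in> C" "x \<in> G1" "y \<in> G2" using xy by blast
      then show ?thesis using cmp[of G1 G2] by blast
    qed
    have gG: "goodcol U K S D G" if "G \<in> C" for G using CA that by blast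
    show "\<Union>C \<in> ?A"
      unfolding mem_Collect_eq goodcol_def
    proof (intro conjI allI impI)
      show "\<Union>C \<subseteq> U \<times> {..<K}"
      proof
        fix z assume "z \<in> \<Union>C"
        then obtain G where "G \<in> C" "z \<in> G" by blast
        then show "z \<in> U \<times> {..<K}" using goodcolD(1)[OF gG] by blast
      qed
    next
      fix p i q j assume a: "(p,i) \<in> \<Union>C" "(q,j) \<in> \<Union>C" "p \<noteq> q"
      then obtain G where "G \<in> C" "(p,i) \<in> G" "(q,j) \<in> G" using two by blast
      then show "S \<le> dist p q" using goodcolD(2-3)[OF gG] a(3) by blast
    next
      fix p i q assume a: "(p,i) \<in> \<Union>C" "(q,i) \<in> \<Union>C" "p \<noteq> q"
      then obtain G where "G \<in> C" "(p,i) \<in> G" "(q,i) \<in> G" using two by blast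
      then show "D < dist p q" using goodcolD(2-3)[OF gG] a(3) by blast
    next
      fix p i j assume a: "(p,i) \<in> \<Union>C" "(p,j) \<in> \<Union>C"
      then obtain G where "G \<in> C" "(p,i) \<in> G" "(p,j) \<in> G" using two by blast
      then show "i = j" using goodcolD(4)[OF gG] by blast
    qed
  qed
  then obtain M where M0: "M \<in> ?A" and Mmax0: "\<forall>G\<in>?A. M \<subseteq> G \<longrightarrow> G = M" by blast
  have M: "goodcol U K S D M" using M0 by simp
  have Mmax: "G = M" if "goodcol U K S D G" "M \<subseteq> G" for G using Mmax0 that by simp
  note MU = goodcolD(1)[OF M] and Msep = goodcolD(2)[OF M] and Mcol = goodcolD(3)[OF M]
    and Mfun = goodcolD(4)[OF M]
  have "\<forall>u\<in>U. \<exists>q i. (q,i) \<in> M \<and> dist u q < S"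
  proof (rule ccontr)
    assume "\<not> ?thesis"
    then obtain u where u: "u \<in> U" and far: "\<And>q i. (q,i) \<in> M \<Longrightarrow> S \<le> dist u q"
      by (auto simp: not_less)
    have Spos: "S > 0" using R S by linarith
    have unot: "(u,j) \<notin> M" for j using far[of u j] Spos by auto
    define Nb where "Nb = {q. \<exists>i. (q,i) \<in> M \<and> dist u q \<le> D}"
    define Cols where "Cols = {i. \<exists>q. (q,i) \<in> M \<and> dist u q \<le> D}"
    have "finite Nb \<and> card Nb \<le> N^3"
    proof (rule sep_count[OF ls R S _ UX])
      show "u \<in> X" using u UX by blast
      show "Nb \<subseteq> U" using MU unfolding Nb_def by blast
      show "Nb \<subseteq> ball u (4*S)" using D unfolding Nb_def by auto
      show "S \<le> dist p q" if "p \<in> Nb" "q \<in> Nb" "p \<noteq> q" for p q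
        using that Msep unfolding Nb_def by blast
    qed
    then have Nbf: "finite Nb" and Nbc: "card Nb \<le> N^3" by auto
    define col where "col q = (THE i. (q,i) \<in> M)" for q
    have colq: "col q = i" if "(q,i) \<in> M" for q i
      unfolding col_def using that Mfun by (intro the_equality) blast+
    have "Cols \<subseteq> col ` Nb"
    proof
      fix i assume "i \<in> Cols"
      then obtain q where q: "(q,i) \<in> M" "dist u q \<le> D" unfolding Cols_def by blast
      then have "q \<in> Nb" unfolding Nb_def by blast
      then show "i \<in> col ` Nb" using colq[OF q(1)] by blast
    qed
    moreover have fi: "finite (col ` Nb)" using Nbf by (rule finite_imageI)
    ultimately have Colsf: "finite Cols" and "card Cols \<le> card (col ` Nb)"
      using finite_subset card_mono by blast+
    then have Colsc: "card Cols \<le> N^3" using card_image_le[OF Nbf, of col] Nbc by linarith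
    have "\<not> {..<K} \<subseteq> Cols"
    proof
      assume "{..<K} \<subseteq> Cols"
      then have "card {..<K} \<le> card Cols" using card_mono[OF Colsf] by blast
      then show False using Colsc K by simp
    qed
    then obtain i where i: "i < K" "i \<notin> Cols" by blast
    define M' where "M' = insert (u,i) M"
    have "goodcol U K S D M'"
      unfolding goodcol_def
    proof (intro conjI allI impI)
      show "M' \<subseteq> U \<times> {..<K}" using MU u i unfolding M'_def by blast
    next
      fix p i1 q j assume a: "(p,i1) \<in> M'" "(q,j) \<in> M'" "p \<noteq> q"
      show "S \<le> dist p q"
      proof (cases "p = u")
        case True
        then have "(q,j) \<in> M" using a unfolding M'_def by auto
        then show ?thesis using far True by blast
      next
        case pu: False
        then have pM: "(p,i1) \<in> M" using a unfolding M'_def by auto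
        show ?thesis
        proof (cases "q = u")
          case True
          then show ?thesis using far[OF pM] by (simp add: dist_commute)
        next
          case False
          then have "(q,j) \<in> M" using a unfolding M'_def by auto
          then show ?thesis using Msep[OF pM] a(3) by blast
        qed
      qed
    next
      fix p i1 q assume a: "(p,i1) \<in> M'" "(q,i1) \<in> M'" "p \<noteq> q"
      show "D < dist p q"
      proof (cases "p = u")
        case True
        then have qM: "(q,i1) \<in> M" using a unfolding M'_def by auto
        have "i1 = i" using a True unot unfolding M'_def by auto
        then have "\<not> dist u q \<le> D" using i(2) qM unfolding Cols_def by blast
        then show ?thesis using True by simp
      next
        case pu: False
        then have pM: "(p,i1) \<in> M" using a unfolding M'_def by auto
        show ?thesis
        proof (cases "q = u")
          case True
          have "i1 = i" using a True unot unfolding M'_def by auto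
          then have "\<not> dist u p \<le> D" using i(2) pM unfolding Cols_def by blast
          then show ?thesis using True by (simp add: dist_commute)
        next
          case False
          then have "(q,i1) \<in> M" using a unfolding M'_def by auto
          then show ?thesis using Mcol[OF pM] a(3) by blast
        qed
      qed
    next
      fix p i1 j assume a: "(p,i1) \<in> M'" "(p,j) \<in> M'"
      show "i1 = j"
      proof (cases "p = u")
        case True
        then show ?thesis using a unot unfolding M'_def by auto
      next
        case False
        then show ?thesis using a Mfun unfolding M'_def by auto
      qed
    qed
    moreover have "M \<subseteq> M'" unfolding M'_def by blast
    ultimately have "M' = M" using Mmax by blast
    then show False using unot[of i] unfolding M'_def by blast
  qed
  then show ?thesis using M by blast
qed


definition arem :: "'a::metric_space set \<Rightarrow> real \<Rightarrow> ('a \<times> nat) set \<Rightarrow> nat \<Rightarrow> 'a set" where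
  "arem U S G j = U - \<Union>{ball q S | q. \<exists>i<j. (q,i) \<in> G}"

lemma Rdisj_single: "R_disjoint R ({E} - {{}})"
  by (auto simp: R_disjoint_def)

lemma Rdisj_empty: "R_disjoint R {}"
  by (auto simp: R_disjoint_def)

lemma triv_dec:
  assumes "A \<in> Y"
  shows "\<exists>U1 U2. R_disjoint R U1 \<and> R_disjoint R U2 \<and> U1 \<union> U2 \<subseteq> Y \<and> A = \<Union>(U1 \<union> U2)"
proof (intro exI conjI)
  show "R_disjoint R ({A} - {{}})" by (rule Rdisj_single)
  show "R_disjoint R {}" by (rule Rdisj_empty)
  show "({A} - {{}}) \<union> {} \<subseteq> Y" using assms by blast
  show "A = \<Union>(({A} - {{}}) \<union> {})" by auto
qed

lemma colour_split:
  assumes G: "goodcol U K S D G" and A: "A \<subseteq> arem U S G j" and RD: "R < D - 2*S"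
  shows "\<exists>U1 U2. R_disjoint R U1 \<and> R_disjoint R U2 \<and> (\<forall>E\<in>U1. \<forall>a\<in>E. \<forall>b\<in>E. dist a b \<le> 2*S)
     \<and> (\<forall>E\<in>U2. E \<subseteq> arem U S G (Suc j)) \<and> A = \<Union>(U1 \<union> U2)"
proof -
  define U1 where "U1 = (\<lambda>q. ball q S \<inter> A) ` {q. (q,j) \<in> G} - {{}}"
  define U2 where "U2 = {A \<inter> arem U S G (Suc j)} - {{}}"
  note Gcol = goodcolD(3)[OF G]
  have "R_disjoint R U1"
    unfolding R_disjoint_def
  proof (intro conjI ballI impI)
    fix E assume "E \<in> U1" then show "E \<noteq> {}" unfolding U1_def by blast
  next
    fix E E' assume E: "E \<in> U1" and E': "E' \<in> U1" and ne: "E \<noteq> E'"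
    obtain q where q: "(q,j) \<in> G" "E = ball q S \<inter> A" "E \<noteq> {}" using E unfolding U1_def by blast
    obtain q' where q': "(q',j) \<in> G" "E' = ball q' S \<inter> A" "E' \<noteq> {}" using E' unfolding U1_def by blast
    have "q \<noteq> q'" using q q' ne by blast
    then have Dq: "D < dist q q'" using Gcol[OF q(1) q'(1)] by blast
    have "D - 2*S \<le> setdist E E'"
    proof (rule le_setdistI[OF q(3) q'(3)])
      fix a b assume a: "a \<in> E" and b: "b \<in> E'"
      have "dist q a < S" using a q(2) by auto
      moreover have "dist q' b < S" using b q'(2) by auto
      moreover have "dist q q' \<le> dist q a + dist a q'" by (rule dist_triangle)
      moreover have "dist a q' \<le> dist a b + dist b q'" by (rule dist_triangle)
      moreover have "dist b q' = dist q' b" by (rule dist_commute)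
      ultimately show "D - 2*S \<le> dist a b" using Dq by linarith
    qed
    then show "R < setdist E E'" using RD by linarith
  qed
  moreover have "R_disjoint R U2" unfolding U2_def by (rule Rdisj_single)
  moreover have "\<forall>E\<in>U1. \<forall>a\<in>E. \<forall>b\<in>E. dist a b \<le> 2*S"
  proof (intro ballI)
    fix E a b assume E: "E \<in> U1" and a: "a \<in> E" and b: "b \<in> E"
    obtain q where q: "E = ball q S \<inter> A" using E unfolding U1_def by blast
    have "dist q a < S" "dist q b < S" using a b q by auto
    moreover have "dist a b \<le> dist q a + dist q b" by (rule dist_triangle3)
    ultimately show "dist a b \<le> 2*S" by linarith
  qed
  moreover have "\<forall>E\<in>U2. E \<subseteq> arem U S G (Suc j)" unfolding U2_def by blast
  moreover have "A = \<Union>(U1 \<union> U2)"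
  proof
    show "\<Union>(U1 \<union> U2) \<subseteq> A" unfolding U1_def U2_def by blast
  next
    show "A \<subseteq> \<Union>(U1 \<union> U2)"
    proof
      fix a assume a: "a \<in> A"
      show "a \<in> \<Union>(U1 \<union> U2)"
      proof (cases "\<exists>q. (q,j) \<in> G \<and> a \<in> ball q S")
        case True
        then obtain q where q: "(q,j) \<in> G" "a \<in> ball q S" by blast
        then have "ball q S \<inter> A \<in> U1" using a unfolding U1_def by blast
        then show ?thesis using q a by blast
      next
        case False
        have aU: "a \<in> arem U S G j" using a A by blast
        have "a \<in> arem U S G (Suc j)"
        proof -
          have "a \<in> U" using aU unfolding arem_def by blast
          moreover have "a \<notin> ball q S" if "(q,i) \<in> G" "i < Suc j" for q i
          proof (cases "i = j")
            case True then show ?thesis using False that by blast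
          next
            case False
            then have "i < j" using that by simp
            then show ?thesis using aU that unfolding arem_def by blast
          qed
          ultimately show ?thesis unfolding arem_def by blast
        qed
        then have "A \<inter> arem U S G (Suc j) \<in> U2" using a unfolding U2_def by blast
        then show ?thesis using a \<open>a \<in> arem U S G (Suc j)\<close> by blast
      qed
    qed
  qed
  ultimately show ?thesis by blast
qed

lemma W_split:
  assumes WD: "R_disjoint R W" and A: "A \<subseteq> Y"
  shows "\<exists>U1 U2. R_disjoint R U1 \<and> R_disjoint R U2 \<and> (\<forall>E\<in>U1. \<exists>V\<in>W. E \<subseteq> V)
     \<and> (\<forall>E\<in>U2. E \<subseteq> Y - \<Union>W) \<and> A = \<Union>(U1 \<union> U2)"
proof -
  define U1 where "U1 = (\<lambda>V. A \<inter> V) ` W - {{}}"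
  define U2 where "U2 = {A - \<Union>W} - {{}}"
  have "R_disjoint R U1"
    unfolding R_disjoint_def
  proof (intro conjI ballI impI)
    fix E assume "E \<in> U1" then show "E \<noteq> {}" unfolding U1_def by blast
  next
    fix E E' assume E: "E \<in> U1" and E': "E' \<in> U1" and ne: "E \<noteq> E'"
    obtain V where V: "V \<in> W" "E = A \<inter> V" "E \<noteq> {}" using E unfolding U1_def by blast
    obtain V' where V': "V' \<in> W" "E' = A \<inter> V'" "E' \<noteq> {}" using E' unfolding U1_def by blast
    have "V \<noteq> V'" using V V' ne by blast
    then have "R < setdist V V'" using WD V(1) V'(1) unfolding R_disjoint_def by auto
    also have "setdist V V' \<le> setdist V E'" by (rule setdist_subset_right) (use V' in auto)
    also have "setdist V E' \<le> setdist E E'" by (rule setdist_subset_left) (use V in auto)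
    finally show "R < setdist E E'" .
  qed
  moreover have "R_disjoint R U2" unfolding U2_def by (rule Rdisj_single)
  moreover have "\<forall>E\<in>U1. \<exists>V\<in>W. E \<subseteq> V" unfolding U1_def by blast
  moreover have "\<forall>E\<in>U2. E \<subseteq> Y - \<Union>W" unfolding U2_def using A by blast
  moreover have "A = \<Union>(U1 \<union> U2)"
  proof
    show "\<Union>(U1 \<union> U2) \<subseteq> A" unfolding U1_def U2_def by auto
  next
    show "A \<subseteq> \<Union>(U1 \<union> U2)"
    proof
      fix a assume a: "a \<in> A"
      show "a \<in> \<Union>(U1 \<union> U2)"
      proof (cases "a \<in> \<Union>W")
        case True
        then obtain V where V: "V \<in> W" "a \<in> V" by blast
        then have "A \<inter> V \<in> U1" using a unfolding U1_def by blast
        then show ?thesis using V a by blast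
      next
        case False
        then have "A - \<Union>W \<in> U2" using a unfolding U2_def by blast
        then show ?thesis using False a by blast
      qed
    qed
  qed
  ultimately show ?thesis by (intro exI[of _ U1] exI[of _ U2]) simp
qed


lemma Xr_Suc: "X - \<Union>(\<Union>l<Suc m. W l) = (X - \<Union>(\<Union>l<m. W l)) - \<Union>(W m)"
  by (auto simp: lessThan_Suc)

theorem theorem4p5:
  fixes X :: "'a::metric_space set"
  assumes "weak_hyperbolic_C X"
  shows "sFDC {X}"
  unfolding sFDC_def
proof (intro allI impI)
  fix Rs :: "nat \<Rightarrow> real" assume pos: "\<forall>i. 0 < Rs i" and mon: "mono Rs"
  have "\<exists>n::nat. \<exists>\<U>::nat \<Rightarrow> 'a set set.
        (\<forall>i\<le>n. R_disjoint (Rs i) (\<U> i)) \<and>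
        (\<forall>i\<le>n. \<forall>U\<in>\<U> i. U \<subseteq> X) \<and>
        \<Union>(\<Union>i\<le>n. \<U> i) = X \<and>
        weakly_uniformly_ls_doubling X (\<Union>i\<le>n. \<U> i)"
    using assms pos unfolding weak_hyperbolic_C_def by blast
  then obtain n W where Wd: "\<forall>i\<le>n. R_disjoint (Rs i) (W i)"
    and Ws: "\<forall>i\<le>n. \<forall>U\<in>W i. U \<subseteq> X" and cov: "\<Union>(\<Union>i\<le>n. W i) = X"
    and wu: "weakly_uniformly_ls_doubling X (\<Union>i\<le>n. W i)"
    by blast
  define Cv where "Cv = (\<Union>i\<le>n. W i)"
  obtain N R0 where R0: "R0 > 0" and dbl: "\<forall>U\<in>Cv. ls_doubling X N R0 U"
    using wu unfolding weakly_uniformly_ls_doubling_def Cv_def by blast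
  define K where "K = N^3 + 1"
  define T where "T = Rs (n+K)"
  define S where "S = 2*R0 + T + 1"
  define D where "D = 2*S + T + 1"
  have Tpos: "T > 0" using pos unfolding T_def by blast
  have CvX: "U \<subseteq> X" if "U \<in> Cv" for U using Ws that unfolding Cv_def by blast
  have ex: "\<exists>G. goodcol U K S D G \<and> (\<forall>u\<in>U. \<exists>q i. (q,i) \<in> G \<and> dist u q < S)" if U: "U \<in> Cv" for U
  proof (rule colour_exists)
    show "ls_doubling X N R0 U" using dbl U by blast
    show "R0 > 0" by (rule R0)
    show "2*R0 \<le> S" using Tpos unfolding S_def by linarith
    show "D < 4*S" using Tpos R0 unfolding D_def S_def by (simp add: distrib_left)
    show "U \<subseteq> X" by (rule CvX[OF U])
    show "N^3 < K" unfolding K_def by simp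
  qed
  define Gf where "Gf (U::'a set) = (SOME G. goodcol U K S D G \<and> (\<forall>u\<in>U. \<exists>q i. (q,i) \<in> G \<and> dist u q < S))" for U
  have Gf: "goodcol U K S D (Gf U) \<and> (\<forall>u\<in>U. \<exists>q i. (q,i) \<in> Gf U \<and> dist u q < S)" if "U \<in> Cv" for U
    unfolding Gf_def by (rule someI_ex[OF ex[OF that]])
  define Xr where "Xr m = X - \<Union>(\<Union>l<m. W l)" for m
  define V where "V k = {A. \<exists>U\<in>Cv. A \<subseteq> arem U S (Gf U) (k-n)} \<union> {A. \<forall>a\<in>A. \<forall>b\<in>A. dist a b \<le> 2*S}
      \<union> {A. A \<subseteq> Xr (k+1)}" for k
  have Xr_empty: "Xr m = {}" if "n < m" for m
  proof -
    have "{..n} \<subseteq> {..<m}" using that by auto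
    then have "(\<Union>i\<le>n. W i) \<subseteq> (\<Union>l<m. W l)" by blast
    then have "X \<subseteq> \<Union>(\<Union>l<m. W l)" using cov by blast
    then show ?thesis unfolding Xr_def by blast
  qed
  have Xr0: "Xr 0 = X" unfolding Xr_def by simp
  have XrS: "Xr (Suc m) = Xr m - \<Union>(W m)" for m unfolding Xr_def by (rule Xr_Suc)
  have arem0: "arem U S G 0 = U" for U G unfolding arem_def by simp
  have aremK: "arem U S (Gf U) K = {}" if U: "U \<in> Cv" for U
  proof -
    have "u \<notin> arem U S (Gf U) K" for u
    proof
      assume u: "u \<in> arem U S (Gf U) K"
      then have "u \<in> U" unfolding arem_def by blast
      then obtain q i where qi: "(q,i) \<in> Gf U" "dist u q < S" using Gf[OF U] by blast
      have "i < K" using goodcolD(1)[of U K S D "Gf U"] Gf[OF U] qi(1) by blast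
      moreover have "u \<in> ball q S" using qi(2) by (simp add: dist_commute)
      ultimately show False using u qi(1) unfolding arem_def by blast
    qed
    then show ?thesis by blast
  qed
  have RsT: "Rs k \<le> T" if "k \<le> n+K" for k using mon that unfolding T_def by (simp add: monoD)
  have bdV: "A \<in> V k" if "\<forall>a\<in>A. \<forall>b\<in>A. dist a b \<le> 2*S" for A k using that unfolding V_def by blast
  have Xstep: "\<exists>U1 U2. R_disjoint (Rs m) U1 \<and> R_disjoint (Rs m) U2 \<and> U1 \<union> U2 \<subseteq> V m \<and> A = \<Union>(U1 \<union> U2)"
    if m: "m \<le> n" and A: "A \<subseteq> Xr m" for m A
  proof -
    have WDm: "R_disjoint (Rs m) (W m)" using Wd m by blast
    obtain U1 U2 where U: "R_disjoint (Rs m) U1" "R_disjoint (Rs m) U2" "\<forall>E\<in>U1. \<exists>V\<in>W m. E \<subseteq> V"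
      "\<forall>E\<in>U2. E \<subseteq> Xr m - \<Union>(W m)" "A = \<Union>(U1 \<union> U2)"
      using W_split[OF WDm A] by blast
    have "U1 \<subseteq> V m"
    proof
      fix E assume "E \<in> U1"
      then obtain Vv where Vv: "Vv \<in> W m" "E \<subseteq> Vv" using U(3) by blast
      have "Vv \<in> Cv" using Vv(1) m unfolding Cv_def by blast
      moreover have "m - n = 0" using m by simp
      ultimately have "\<exists>U\<in>Cv. E \<subseteq> arem U S (Gf U) (m-n)" using Vv(2) arem0 by metis
      then show "E \<in> V m" unfolding V_def by blast
    qed
    moreover have "U2 \<subseteq> V m"
    proof
      fix E assume "E \<in> U2"
      then have "E \<subseteq> Xr (m+1)" using U(4) XrS by simp
      then show "E \<in> V m" unfolding V_def by blast
    qed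
    ultimately show ?thesis using U(1,2,5) by blast
  qed
  show "\<exists>n' \<U>. uniformly_bounded (\<U> n') \<and> decomposes (Rs 0) {X} (\<U> 0) \<and>
          (\<forall>i<n'. decomposes (Rs (Suc i)) (\<U> i) (\<U> (Suc i)))"
  proof (intro exI conjI)
    show "uniformly_bounded (V (n+K))"
      unfolding uniformly_bounded_def
    proof (intro exI ballI)
      fix A a b assume A: "A \<in> V (n+K)" and a: "a \<in> A" and b: "b \<in> A"
      have "n + K - n = K" by simp
      moreover have "Xr (n+K+1) = {}" by (rule Xr_empty) (simp add: K_def)
      ultimately have "\<forall>a\<in>A. \<forall>b\<in>A. dist a b \<le> 2*S" using A aremK unfolding V_def by fastforce
      then show "dist a b \<le> 2*S" using a b by blast
    qed
    show "decomposes (Rs 0) {X} (V 0)"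
      unfolding decomposes_def using Xstep[of 0 X] Xr0 by simp
    show "\<forall>i<n+K. decomposes (Rs (Suc i)) (V i) (V (Suc i))"
    proof (intro allI impI)
      fix i assume i: "i < n+K"
      show "decomposes (Rs (Suc i)) (V i) (V (Suc i))"
        unfolding decomposes_def
      proof
        fix A assume A: "A \<in> V i"
        show "\<exists>U1 U2. R_disjoint (Rs (Suc i)) U1 \<and> R_disjoint (Rs (Suc i)) U2 \<and> U1 \<union> U2 \<subseteq> V (Suc i) \<and> A = \<Union>(U1 \<union> U2)"
        proof (cases "\<forall>a\<in>A. \<forall>b\<in>A. dist a b \<le> 2*S")
          case True
          then show ?thesis by (intro triv_dec bdV)
        next
          case nb: False
          show ?thesis
          proof (cases "A \<subseteq> Xr (i+1)")
            case True
            show ?thesis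
            proof (cases "Suc i \<le> n")
              case True
              then show ?thesis using Xstep[of "Suc i" A] \<open>A \<subseteq> Xr (i+1)\<close> by simp
            next
              case False
              then have "A = {}" using \<open>A \<subseteq> Xr (i+1)\<close> Xr_empty[of "i+1"] by simp
              then show ?thesis using nb by simp
            qed
          next
            case False
            then obtain U where U: "U \<in> Cv" and AU: "A \<subseteq> arem U S (Gf U) (i-n)"
              using A nb unfolding V_def by blast
            show ?thesis
            proof (cases "i < n")
              case True
              then have "i - n = Suc i - n" by simp
              then have "A \<in> V (Suc i)" using U AU unfolding V_def by auto
              then show ?thesis by (rule triv_dec)
            next
              case False
              define j where "j = i - n"
              have SJ: "Suc i - n = Suc j" using False unfolding j_def by simp
              have "Rs (Suc i) \<le> T" using i by (intro RsT) simp
              then have RD: "Rs (Suc i) < D - 2*S" unfolding D_def by linarith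
              have GU: "goodcol U K S D (Gf U)" using Gf[OF U] by blast
              obtain U1 U2 where UU: "R_disjoint (Rs (Suc i)) U1" "R_disjoint (Rs (Suc i)) U2"
                "\<forall>E\<in>U1. \<forall>a\<in>E. \<forall>b\<in>E. dist a b \<le> 2*S"
                "\<forall>E\<in>U2. E \<subseteq> arem U S (Gf U) (Suc j)" "A = \<Union>(U1 \<union> U2)"
                using colour_split[OF GU AU[unfolded j_def[symmetric]] RD] by blast
              have "U1 \<subseteq> V (Suc i)" using UU(3) bdV by blast
              moreover have "U2 \<subseteq> V (Suc i)" using UU(4) U SJ unfolding V_def by auto
              ultimately show ?thesis using UU(1,2,5) by blast
            qed
          qed
        qed
      qed
    qed
  qed
qed

end
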